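(* Let $G=(V,E)$ be a graph and, for each $(u,v)\in E$, let $\mathcal P_{u,v}$ be the set of stretch-$k$ paths from $u$ to $v$. A vector $\mathbf x\in\mathbb R^{E}$ is feasible for $\text{LP}_{Spanner}$ if and only if there exist values $f_P$ for each $(u,v)\in E$ and $P\in\mathcal P_{u,v}$ such that $(\mathbf x,\mathbf f)$ is feasible for $\text{LP}^{Flow}_{Spanner}$.
   Context: $\text{LP}^{Flow}_{Spanner}$ has variables $x_e$ ($e\in E$) and $f_P$ ($(u,v)\in E$, $P\in\mathcal P_{u,v}$) and constraints: $\sum_{P\in\mathcal P_{u,v}:e\in P}f_P\le x_e$ for all $(u,v)\in E$ and $e\in E$; $\sum_{P\in\mathcal P_{u,v}}f_P\ge1$ for all $(u,v)\in E$; $x_e\ge0$; $f_P\ge0$ (objective $\min\sum_e x_e$). With $\mathcal Z^{u,v}=\{\mathbf z\in[0,1]^{E}:\sum_{e\in P}z_e\ge1\ \forall P\in\mathcal P_{u,v}\}$, $\text{LP}_{Spanner}$ has variables $x_e$ ($e\in E$) and constraints $\sum_{e\in E}z_ex_e\ge1$ for all $(u,v)\in E$ and all $\mathbf z\in\mathcal Z^{u,v}$, and $x_e\ge0$ for all $e\in E$ (objective $\min\sum_e x_e$). A stretch-$k$ path from $u$ to $v$ is a $u$-to-$v$ path in $G$ of length at most $k\cdot d_G(u,v)$. *)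

theory Defs
  imports Main "HOL-Library.Multiset" Complex_Main
begin

text \<open>A (directed) graph is given by a finite vertex set V and an edge set
E \<subseteq> V \<times> V, together with positive edge lengths w (the unweighted
case is w = 1).\<close>

definition path_edges :: "'a list \<Rightarrow> ('a \<times> 'a) set" where
  "path_edges p = set (zip p (tl p))"

definition path_len :: "('a \<times> 'a \<Rightarrow> real) \<Rightarrow> 'a list \<Rightarrow> real" where
  "path_len w p = sum_list (map w (zip p (tl p)))"

definition is_path :: "('a \<times> 'a) set \<Rightarrow> 'a \<Rightarrow> 'a \<Rightarrow> 'a list \<Rightarrow> bool" where
  "is_path E u v p \<longleftrightarrow> p \<noteq> [] \<and> hd p = u \<and> last p = v \<and> distinct p \<and>
     (\<forall>i. Suc i < length p \<longrightarrow> (p ! i, p ! Suc i) \<in> E)"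

definition dist_G :: "('a \<times> 'a) set \<Rightarrow> ('a \<times> 'a \<Rightarrow> real) \<Rightarrow> 'a \<Rightarrow> 'a \<Rightarrow> real" where
  "dist_G E w u v = Inf (path_len w ` {p. is_path E u v p})"

definition stretch_paths ::
  "('a \<times> 'a) set \<Rightarrow> ('a \<times> 'a \<Rightarrow> real) \<Rightarrow> real \<Rightarrow> 'a \<Rightarrow> 'a \<Rightarrow> 'a list set" where
  "stretch_paths E w k u v = {p. is_path E u v p \<and> path_len w p \<le> k * dist_G E w u v}"

definition Zset :: "('a \<times> 'a) set \<Rightarrow> 'a list set \<Rightarrow> ('a \<times> 'a \<Rightarrow> real) set" where
  "Zset E \<P> = {z. (\<forall>e\<in>E. 0 \<le> z e \<and> z e \<le> 1) \<and>
                   (\<forall>P\<in>\<P>. (\<Sum>e\<in>path_edges P. z e) \<ge> 1)}"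

text \<open>Feasibility for LP_Spanner; \<P> u v is the path set of the demand (u,v).\<close>
definition LP_spanner_feasible ::
  "('a \<times> 'a) set \<Rightarrow> ('a \<Rightarrow> 'a \<Rightarrow> 'a list set) \<Rightarrow> ('a \<times> 'a \<Rightarrow> real) \<Rightarrow> bool" where
  "LP_spanner_feasible E \<P> x \<longleftrightarrow>
     (\<forall>(u,v)\<in>E. \<forall>z\<in>Zset E (\<P> u v). (\<Sum>e\<in>E. z e * x e) \<ge> 1) \<and>
     (\<forall>e\<in>E. x e \<ge> 0)"

text \<open>Feasibility for LP^Flow_Spanner; f (u,v) P is the flow on path P for demand (u,v).\<close>
definition LP_flow_feasible ::
  "('a \<times> 'a) set \<Rightarrow> ('a \<Rightarrow> 'a \<Rightarrow> 'a list set) \<Rightarrow> ('a \<times> 'a \<Rightarrow> real)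
     \<Rightarrow> ('a \<times> 'a \<Rightarrow> 'a list \<Rightarrow> real) \<Rightarrow> bool" where
  "LP_flow_feasible E \<P> x f \<longleftrightarrow>
     (\<forall>(u,v)\<in>E. \<forall>e\<in>E. (\<Sum>P\<in>{P\<in>\<P> u v. e \<in> path_edges P}. f (u,v) P) \<le> x e) \<and>
     (\<forall>(u,v)\<in>E. (\<Sum>P\<in>\<P> u v. f (u,v) P) \<ge> 1) \<and>
     (\<forall>e\<in>E. x e \<ge> 0) \<and>
     (\<forall>(u,v)\<in>E. \<forall>P\<in>\<P> u v. f (u,v) P \<ge> 0)"

end

theory Submission imports Defs begin

definition comb :: "'j \<Rightarrow> (('j\<Rightarrow>real)\<times>real) \<Rightarrow> (('j\<Rightarrow>real)\<times>real) \<Rightarrow> (('j\<Rightarrow>real)\<times>real)" where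
 "comb j0 p n = ((\<lambda>j. (- fst n j0) * fst p j + fst p j0 * fst n j), (- fst n j0) * snd p + fst p j0 * snd n)"

lemma msum_split:
  "(\<Sum>c\<in>#C. f c) = (\<Sum>c\<in>#filter_mset P C. f c) + (\<Sum>c\<in>#filter_mset (\<lambda>c. \<not> P c) C. f c)"
  by (induction C) (auto simp: add_ac)

lemma msum_cong: "(\<And>x. x \<in># M \<Longrightarrow> f x = g x) \<Longrightarrow> (\<Sum>x\<in>#M. f x) = (\<Sum>x\<in>#M. g x)"
  by (metis image_mset_cong)

lemma msum_nonneg: "(\<And>x. x \<in># M \<Longrightarrow> (0::real) \<le> f x) \<Longrightarrow> 0 \<le> (\<Sum>x\<in>#M. f x)"
  by (induction M) auto

lemma msum_nonpos_neg: "(\<And>x. x \<in># M \<Longrightarrow> f x \<le> (0::real)) \<Longrightarrow> c \<in># M \<Longrightarrow> f c < 0 \<Longrightarrow> (\<Sum>x\<in>#M. f x) < 0"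
proof -
  assume a: "\<And>x. x \<in># M \<Longrightarrow> f x \<le> (0::real)" and c: "c \<in># M" and fc: "f c < 0"
  obtain M' where M: "M = add_mset c M'" using c by (metis mset_add)
  have "(\<Sum>x\<in>#M'. f x) \<le> 0" using a M by (induction M' arbitrary: M) (auto, smt (verit) add_mset_commute union_mset_add_mset_left)
  then show ?thesis using M fc by simp
qed

lemma msum_double:
  "(\<Sum>c\<in>#(\<Sum>p\<in>#P. image_mset (h p) N). g c) = (\<Sum>p\<in>#P. \<Sum>n\<in>#N. g (h p n))"
  by (induction P) (auto simp: multiset.map_comp o_def)

lemma farkas:
  fixes C :: "(('j \<Rightarrow> real) \<times> real) multiset"
  assumes "finite J" and "\<not> (\<exists>y. \<forall>c\<in>#C. (\<Sum>j\<in>J. fst c j * y j) \<le> snd c)"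
  shows "\<exists>\<mu>. (\<forall>c\<in>#C. \<mu> c \<ge> 0) \<and> (\<forall>j\<in>J. (\<Sum>c\<in>#C. \<mu> c * fst c j) = 0) \<and> (\<Sum>c\<in>#C. \<mu> c * snd c) < 0"
  using assms
proof (induction J arbitrary: C rule: finite_induct)
  case empty
  then obtain c0 where c0: "c0 \<in># C" "snd c0 < 0" by auto
  define \<mu> where "\<mu> = (\<lambda>c::('j \<Rightarrow> real) \<times> real. if snd c < 0 then (1::real) else 0)"
  have "(\<Sum>c\<in>#C. \<mu> c * snd c) < 0"
    by (rule msum_nonpos_neg[OF _ c0(1)]) (use c0 in \<open>auto simp: \<mu>_def\<close>)
  then show ?case by (intro exI[of _ \<mu>]) (auto simp: \<mu>_def)
next
  case (insert x F)
  define Z where "Z = filter_mset (\<lambda>c. fst c x = 0) C"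
  define Pp where "Pp = filter_mset (\<lambda>c. fst c x > 0) C"
  define N where "N = filter_mset (\<lambda>c. fst c x < 0) C"
  define C' where "C' = Z + (\<Sum>p\<in>#Pp. image_mset (comb x p) N)"
  have combin: "comb x p n \<in># C'" if "p \<in># Pp" "n \<in># N" for p n
    using that unfolding C'_def by auto
  have ZC': "c \<in># C'" if "c \<in># Z" for c using that unfolding C'_def by auto
  have C'x: "fst c x = 0" if "c \<in># C'" for c
    using that unfolding C'_def Z_def by (auto simp: comb_def)
  have "\<not> (\<exists>y. \<forall>c\<in>#C'. (\<Sum>j\<in>F. fst c j * y j) \<le> snd c)"
  proof
    assume "\<exists>y. \<forall>c\<in>#C'. (\<Sum>j\<in>F. fst c j * y j) \<le> snd c"
    then obtain y where y: "\<And>c. c \<in># C' \<Longrightarrow> (\<Sum>j\<in>F. fst c j * y j) \<le> snd c" by blast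
    define s where "s (c::('j \<Rightarrow> real) \<times> real) = (\<Sum>j\<in>F. fst c j * y j)" for c
    define lo where "lo (n::('j \<Rightarrow> real) \<times> real) = (snd n - s n) / fst n x" for n
    define up where "up (n::('j \<Rightarrow> real) \<times> real) = (snd n - s n) / fst n x" for n
    define t where "t = (if N = {#} then (if Pp = {#} then 0 else Min (up ` set_mset Pp)) else Max (lo ` set_mset N))"
    have scomb: "s (comb x p n) = (- fst n x) * s p + fst p x * s n" for p n
      unfolding s_def comb_def fst_conv
      by (simp add: sum_distrib_left flip: sum.distrib, rule sum.cong, simp_all add: algebra_simps)
    have loup: "lo n \<le> up p" if "p \<in># Pp" "n \<in># N" for p n
    proof -
      have ap: "fst p x > 0" using that Pp_def by auto
      have an: "fst n x < 0" using that N_def by auto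
      have "s (comb x p n) \<le> snd (comb x p n)" using y[OF combin[OF that]] s_def by simp
      then have h: "(- fst n x) * s p + fst p x * s n \<le> (- fst n x) * snd p + fst p x * snd n"
        using scomb by (simp add: comb_def)
      have "lo n = (s n - snd n) / (- fst n x)" unfolding lo_def using an by (simp add: field_simps)
      also have "\<dots> \<le> (snd p - s p) / fst p x"
        using h ap an by (simp add: divide_simps, simp add: algebra_simps)
      finally show ?thesis unfolding up_def .
    qed
    define y' where "y' = y(x := t)"
    have "\<forall>c\<in>#C. (\<Sum>j\<in>insert x F. fst c j * y' j) \<le> snd c"
    proof
      fix c assume cC: "c \<in># C"
      have eq: "(\<Sum>j\<in>insert x F. fst c j * y' j) = fst c x * t + s c"
        using insert.hyps unfolding s_def y'_def by (simp add: sum.insert, intro sum.cong, auto)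
      consider "fst c x = 0" | "fst c x > 0" | "fst c x < 0" by linarith
      then show "(\<Sum>j\<in>insert x F. fst c j * y' j) \<le> snd c"
      proof cases
        case 1
        then have "c \<in># Z" using cC Z_def by auto
        then show ?thesis using eq 1 y[OF ZC'] s_def by simp
      next
        case 2
        then have cP: "c \<in># Pp" using cC Pp_def by auto
        have "t \<le> up c"
        proof (cases "N = {#}")
          case True
          then have "t = Min (up ` set_mset Pp)" using cP t_def by auto
          then show ?thesis using cP by auto
        next
          case False
          then have "t = Max (lo ` set_mset N)" using t_def by auto
          moreover have "Max (lo ` set_mset N) \<in> lo ` set_mset N"
            using False by (intro Max_in) auto
          ultimately obtain n where "n \<in># N" "t = lo n" by auto
          then show ?thesis using loup[OF cP] by auto
        qed
        then show ?thesis using eq 2 unfolding up_def by (simp add: pos_le_divide_eq algebra_simps)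
      next
        case 3
        then have cN: "c \<in># N" using cC N_def by auto
        then have "N \<noteq> {#}" by auto
        then have "t = Max (lo ` set_mset N)" using t_def by auto
        then have "lo c \<le> t" using cN by auto
        then show ?thesis using eq 3 unfolding lo_def by (simp add: neg_divide_le_eq algebra_simps)
      qed
    qed
    then show False using insert.prems by blast
  qed
  from insert.IH[OF this] obtain \<mu>' where
    m1: "\<forall>c\<in>#C'. \<mu>' c \<ge> 0" and m2: "\<forall>j\<in>F. (\<Sum>c\<in>#C'. \<mu>' c * fst c j) = 0"
    and m3: "(\<Sum>c\<in>#C'. \<mu>' c * snd c) < 0" by blast
  define \<mu> where "\<mu> c = (if fst c x = 0 then \<mu>' c else if fst c x > 0 then
     (\<Sum>n\<in>#N. \<mu>' (comb x c n) * (- fst n x)) else (\<Sum>p\<in>#Pp. \<mu>' (comb x p c) * fst p x))" for c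
  have key: "(\<Sum>c\<in>#C. \<mu> c * g c) = (\<Sum>c\<in>#C'. \<mu>' c * g c)"
    if g: "\<And>p n. g (comb x p n) = (- fst n x) * g p + fst p x * g n" for g
  proof -
    have s1: "(\<Sum>c\<in>#C. \<mu> c * g c) = (\<Sum>c\<in>#Z. \<mu> c * g c) + (\<Sum>c\<in>#Pp. \<mu> c * g c) + (\<Sum>c\<in>#N. \<mu> c * g c)"
    proof -
      have "(\<Sum>c\<in>#C. \<mu> c * g c) = (\<Sum>c\<in>#Z. \<mu> c * g c) + (\<Sum>c\<in>#filter_mset (\<lambda>c. fst c x \<noteq> 0) C. \<mu> c * g c)"
        unfolding Z_def by (rule msum_split)
      also have "(\<Sum>c\<in>#filter_mset (\<lambda>c. fst c x \<noteq> 0) C. \<mu> c * g c) = (\<Sum>c\<in>#Pp. \<mu> c * g c) + (\<Sum>c\<in>#N. \<mu> c * g c)"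
        apply (subst msum_split[where P = "\<lambda>c. fst c x > 0"])
        unfolding Pp_def N_def by (simp add: filter_filter_mset) (smt (verit) filter_mset_cong)
      finally show ?thesis by simp
    qed
    have sZ: "(\<Sum>c\<in>#Z. \<mu> c * g c) = (\<Sum>c\<in>#Z. \<mu>' c * g c)"
      by (rule msum_cong) (auto simp: \<mu>_def Z_def)
    have sP: "(\<Sum>c\<in>#Pp. \<mu> c * g c) = (\<Sum>p\<in>#Pp. \<Sum>n\<in>#N. \<mu>' (comb x p n) * (- fst n x) * g p)"
      by (rule msum_cong) (auto simp: \<mu>_def Pp_def sum_mset_distrib_right)
    have sN: "(\<Sum>c\<in>#N. \<mu> c * g c) = (\<Sum>p\<in>#Pp. \<Sum>n\<in>#N. \<mu>' (comb x p n) * fst p x * g n)"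
    proof -
      have "(\<Sum>c\<in>#N. \<mu> c * g c) = (\<Sum>n\<in>#N. \<Sum>p\<in>#Pp. \<mu>' (comb x p n) * fst p x * g n)"
        by (rule msum_cong) (auto simp: \<mu>_def N_def sum_mset_distrib_right)
      then show ?thesis by (simp add: sum_mset.swap[of _ N Pp])
    qed
    have "(\<Sum>p\<in>#Pp. \<Sum>n\<in>#N. \<mu>' (comb x p n) * (- fst n x) * g p) + (\<Sum>p\<in>#Pp. \<Sum>n\<in>#N. \<mu>' (comb x p n) * fst p x * g n)
        = (\<Sum>p\<in>#Pp. \<Sum>n\<in>#N. \<mu>' (comb x p n) * g (comb x p n))"
      by (simp add: g sum_mset.distrib[symmetric] algebra_simps)
    also have "\<dots> = (\<Sum>c\<in>#(\<Sum>p\<in>#Pp. image_mset (comb x p) N). \<mu>' c * g c)"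
      by (rule msum_double[symmetric])
    finally show ?thesis using s1 sZ sP sN unfolding C'_def by simp
  qed
  show ?case
  proof (intro exI[of _ \<mu>] conjI ballI)
    fix c assume cC: "c \<in># C"
    show "\<mu> c \<ge> 0"
    proof -
      consider "fst c x = 0" | "fst c x > 0" | "fst c x < 0" by linarith
      then show ?thesis
      proof cases
        case 1 then show ?thesis using m1 ZC' cC Z_def \<mu>_def by auto
      next
        case 2
        then have "c \<in># Pp" using cC Pp_def by auto
        then show ?thesis using 2 unfolding \<mu>_def
          by (auto intro!: msum_nonneg mult_nonneg_nonneg simp: N_def mult_nonneg_nonpos dest!: combin m1[rule_format])
      next
        case 3
        then have cN: "c \<in># N" using cC N_def by auto
        have "0 \<le> \<mu>' (comb x p c) * fst p x" if "p \<in># Pp" for p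
          using m1 combin[OF that cN] that unfolding Pp_def by auto
        then show ?thesis using 3 unfolding \<mu>_def by (auto intro!: msum_nonneg)
      qed
    qed
  next
    fix j assume j: "j \<in> insert x F"
    show "(\<Sum>c\<in>#C. \<mu> c * fst c j) = 0"
    proof (cases "j = x")
      case True
      have "(\<Sum>c\<in>#C. \<mu> c * fst c j) = (\<Sum>c\<in>#C'. \<mu>' c * fst c j)"
        by (rule key) (simp add: comb_def True)
      also have "\<dots> = 0" using C'x True by (simp add: msum_cong[where g = "\<lambda>_. 0"])
      finally show ?thesis .
    next
      case False
      then have "j \<in> F" using j by auto
      have "(\<Sum>c\<in>#C. \<mu> c * fst c j) = (\<Sum>c\<in>#C'. \<mu>' c * fst c j)"
        by (rule key) (simp add: comb_def)
      then show ?thesis using m2 \<open>j \<in> F\<close> by simp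
    qed
  next
    have "(\<Sum>c\<in>#C. \<mu> c * snd c) = (\<Sum>c\<in>#C'. \<mu>' c * snd c)"
      by (rule key) (simp add: comb_def)
    then show "(\<Sum>c\<in>#C. \<mu> c * snd c) < 0" using m3 by simp
  qed
qed

lemma path_edges_sub:
  assumes "is_path E u v p" shows "path_edges p \<subseteq> E"
proof
  fix e assume "e \<in> path_edges p"
  then obtain i where "i < min (length p) (length (tl p))" "e = (p ! i, tl p ! i)"
    unfolding path_edges_def set_zip by auto
  then have i: "Suc i < length p" "e = (p ! i, p ! Suc i)" by (auto simp: nth_tl)
  have "\<forall>i. Suc i < length p \<longrightarrow> (p ! i, p ! Suc i) \<in> E" using assms unfolding is_path_def by blast
  then show "e \<in> E" using i by simp
qed

lemma path_set_sub:
  assumes "is_path E u v p" "v \<in> V" "E \<subseteq> V \<times> V" shows "set p \<subseteq> V"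
proof
  fix y assume "y \<in> set p"
  then obtain i where i: "i < length p" "y = p ! i" by (auto simp: in_set_conv_nth)
  show "y \<in> V"
  proof (cases "Suc i < length p")
    case True
    then have "(p ! i, p ! Suc i) \<in> E" using assms(1) unfolding is_path_def by auto
    then show ?thesis using i assms(3) by auto
  next
    case False
    then have "i = length p - 1" using i by auto
    moreover have "p \<noteq> []" using i by auto
    ultimately have "y = last p" using i by (simp add: last_conv_nth)
    then show ?thesis using assms(1,2) unfolding is_path_def by auto
  qed
qed

lemma finite_stretch:
  assumes "finite V" "E \<subseteq> V \<times> V" "v \<in> V"
  shows "finite (stretch_paths E w k u v)"
proof -
  have "stretch_paths E w k u v \<subseteq> {xs. set xs \<subseteq> V \<and> length xs \<le> card V}"
  proof
    fix p assume "p \<in> stretch_paths E w k u v"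
    then have p: "is_path E u v p" unfolding stretch_paths_def by auto
    have s: "set p \<subseteq> V" using path_set_sub[OF p assms(3) assms(2)] .
    have "length p = card (set p)" using p unfolding is_path_def by (simp add: distinct_card)
    also have "\<dots> \<le> card V" using s assms(1) by (rule card_mono[rotated])
    finally show "p \<in> {xs. set xs \<subseteq> V \<and> length xs \<le> card V}" using s by auto
  qed
  moreover have "finite {xs. set xs \<subseteq> V \<and> length xs \<le> card V}"
    using assms(1) by (rule finite_lists_length_le)
  ultimately show ?thesis by (rule finite_subset)
qed

lemma duality_one:
  fixes Ps :: "'a list set" and x :: "'a \<times> 'a \<Rightarrow> real" and E :: "('a \<times> 'a) set"
  assumes fE: "finite E" and fP: "finite Ps" and sub: "\<forall>P\<in>Ps. path_edges P \<subseteq> E"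
    and xnn: "\<forall>e\<in>E. x e \<ge> 0"
  shows "(\<forall>z\<in>Zset E Ps. (\<Sum>e\<in>E. z e * x e) \<ge> 1) \<longleftrightarrow>
    (\<exists>g. (\<forall>e\<in>E. (\<Sum>P\<in>{P\<in>Ps. e\<in>path_edges P}. g P) \<le> x e) \<and> (\<Sum>P\<in>Ps. g P) \<ge> 1 \<and> (\<forall>P\<in>Ps. g P \<ge> 0))"
proof
  assume H: "\<forall>z\<in>Zset E Ps. (\<Sum>e\<in>E. z e * x e) \<ge> 1"
  show "\<exists>g. (\<forall>e\<in>E. (\<Sum>P\<in>{P\<in>Ps. e\<in>path_edges P}. g P) \<le> x e) \<and> (\<Sum>P\<in>Ps. g P) \<ge> 1 \<and> (\<forall>P\<in>Ps. g P \<ge> 0)"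
  proof (rule ccontr)
    assume nf: "\<not> ?thesis"
    define pc :: "'a list \<Rightarrow> ('a list \<Rightarrow> real) \<times> real" where "pc P = ((\<lambda>j. if j = P then -1 else 0), 0::real)" for P
    define ec :: "'a \<times> 'a \<Rightarrow> ('a list \<Rightarrow> real) \<times> real" where "ec e = ((\<lambda>j. if e \<in> path_edges j then 1 else 0), x e)" for e
    define lc :: "('a list \<Rightarrow> real) \<times> real" where "lc = ((\<lambda>j. -1), -1)"
    define C where "C = image_mset pc (mset_set Ps) + image_mset ec (mset_set E) + {#lc#}"
    have msum: "(\<Sum>c\<in>#C. h c) = (\<Sum>P\<in>Ps. h (pc P)) + (\<Sum>e\<in>E. h (ec e)) + h lc" for h :: "_ \<Rightarrow> real"
      unfolding C_def by (simp add: sum_unfold_sum_mset multiset.map_comp o_def)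
    have inP: "pc P \<in># C" if "P \<in> Ps" for P
      using that fP fE unfolding C_def by auto
    have inE: "ec e \<in># C" if "e \<in> E" for e
      using that fP fE unfolding C_def by auto
    have inL: "lc \<in># C" unfolding C_def by auto
    have "\<not> (\<exists>y. \<forall>c\<in>#C. (\<Sum>j\<in>Ps. fst c j * y j) \<le> snd c)"
    proof
      assume "\<exists>y. \<forall>c\<in>#C. (\<Sum>j\<in>Ps. fst c j * y j) \<le> snd c"
      then obtain y where y: "\<And>c. c \<in># C \<Longrightarrow> (\<Sum>j\<in>Ps. fst c j * y j) \<le> snd c" by blast
      have "\<forall>e\<in>E. (\<Sum>P\<in>{P\<in>Ps. e\<in>path_edges P}. y P) \<le> x e"
      proof
        fix e assume e: "e \<in> E"
        have yy: "(\<Sum>j\<in>Ps. fst (ec e) j * y j) \<le> snd (ec e)"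
          using y[OF inE[OF e]] .
        show "(\<Sum>P\<in>{P\<in>Ps. e\<in>path_edges P}. y P) \<le> x e"
        proof -
          have "(\<Sum>j\<in>Ps. fst (ec e) j * y j) = (\<Sum>P\<in>Ps. if e \<in> path_edges P then y P else 0)"
            by (rule sum.cong) (auto simp: ec_def)
          then show ?thesis using fP yy by (simp add: sum.inter_filter ec_def)
        qed
      qed
      moreover have "(\<Sum>P\<in>Ps. y P) \<ge> 1"
        using y[OF inL] by (simp add: lc_def sum_negf)
      moreover have "\<forall>P\<in>Ps. y P \<ge> 0"
      proof
        fix P assume P: "P \<in> Ps"
        have "(\<Sum>j\<in>Ps. fst (pc P) j * y j) \<le> snd (pc P)"
          using y[OF inP[OF P]] .
        moreover have "(\<Sum>j\<in>Ps. fst (pc P) j * y j) = (\<Sum>j\<in>Ps. if j = P then - y j else 0)"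
          by (rule sum.cong) (auto simp: pc_def)
        ultimately show "y P \<ge> 0" using fP P by (simp add: pc_def)
      qed
      ultimately show False using nf by blast
    qed
    from farkas[OF fP this] obtain \<mu> where
      m1: "\<forall>c\<in>#C. \<mu> c \<ge> 0" and m2: "\<forall>j\<in>Ps. (\<Sum>c\<in>#C. \<mu> c * fst c j) = 0"
      and m3: "(\<Sum>c\<in>#C. \<mu> c * snd c) < 0" by blast
    define \<beta> where "\<beta> e = \<mu> (ec e)" for e
    define \<gamma> where "\<gamma> = \<mu> lc"
    have bnn: "\<beta> e \<ge> 0" if "e \<in> E" for e using m1 inE[OF that] unfolding \<beta>_def by auto
    have gnn: "\<gamma> \<ge> 0" using m1 inL unfolding \<gamma>_def by auto
    have pathsum: "(\<Sum>e\<in>path_edges P. \<beta> e) \<ge> \<gamma>" if P: "P \<in> Ps" for P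
    proof -
      have "(\<Sum>c\<in>#C. \<mu> c * fst c P) = 0" using m2 P by auto
      then have "(\<Sum>Q\<in>Ps. \<mu> (pc Q) * fst (pc Q) P) + (\<Sum>e\<in>E. \<beta> e * fst (ec e) P) - \<gamma> = 0"
        unfolding msum \<beta>_def \<gamma>_def by (simp add: lc_def)
      moreover have "(\<Sum>Q\<in>Ps. \<mu> (pc Q) * fst (pc Q) P) = - \<mu> (pc P)"
      proof -
        have "(\<Sum>Q\<in>Ps. \<mu> (pc Q) * fst (pc Q) P) = (\<Sum>Q\<in>Ps. if Q = P then - \<mu> (pc Q) else 0)"
          by (rule sum.cong) (auto simp: pc_def)
        then show ?thesis using P fP by simp
      qed
      moreover have "(\<Sum>e\<in>E. \<beta> e * fst (ec e) P) = (\<Sum>e\<in>path_edges P. \<beta> e)"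
      proof -
        have "(\<Sum>e\<in>E. \<beta> e * fst (ec e) P) = (\<Sum>e\<in>{e\<in>E. e \<in> path_edges P}. \<beta> e)"
        proof -
          have "(\<Sum>e\<in>E. \<beta> e * fst (ec e) P) = (\<Sum>e\<in>E. if e \<in> path_edges P then \<beta> e else 0)"
            by (rule sum.cong) (auto simp: ec_def)
          then show ?thesis using fE by (simp add: sum.inter_filter)
        qed
        also have "{e\<in>E. e \<in> path_edges P} = path_edges P" using sub P by auto
        finally show ?thesis .
      qed
      moreover have "\<mu> (pc P) \<ge> 0" using m1 inP[OF P] by auto
      ultimately show ?thesis by linarith
    qed
    have bx: "(\<Sum>e\<in>E. \<beta> e * x e) < \<gamma>"
      using m3 unfolding msum \<beta>_def \<gamma>_def by (simp add: pc_def ec_def lc_def)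
    have "(\<Sum>e\<in>E. \<beta> e * x e) \<ge> 0" using bnn xnn by (auto intro: sum_nonneg)
    then have gpos: "\<gamma> > 0" using bx by linarith
    define z where "z e = min 1 (\<beta> e / \<gamma>)" for e
    have "z \<in> Zset E Ps"
      unfolding Zset_def
    proof (intro CollectI conjI ballI)
      fix e assume "e \<in> E" then show "0 \<le> z e" "z e \<le> 1" using bnn gpos by (auto simp: z_def)
    next
      fix P assume P: "P \<in> Ps"
      have fin: "finite (path_edges P)" unfolding path_edges_def by simp
      show "1 \<le> (\<Sum>e\<in>path_edges P. z e)"
      proof (cases "\<exists>e\<in>path_edges P. \<beta> e / \<gamma> \<ge> 1")
        case True
        then obtain e0 where e0: "e0 \<in> path_edges P" "\<beta> e0 / \<gamma> \<ge> 1" by blast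
        have zn: "0 \<le> z e" if "e \<in> path_edges P" for e
        proof -
          have "e \<in> E" using that sub P by blast
          then show ?thesis using bnn gpos by (simp add: z_def)
        qed
        have "z e0 \<le> (\<Sum>e\<in>path_edges P. z e)"
          using e0 fin zn by (intro member_le_sum) auto
        then show ?thesis using e0 by (simp add: z_def)
      next
        case False
        then have "(\<Sum>e\<in>path_edges P. z e) = (\<Sum>e\<in>path_edges P. \<beta> e / \<gamma>)"
          by (intro sum.cong refl) (auto simp: z_def)
        also have "\<dots> = (\<Sum>e\<in>path_edges P. \<beta> e) / \<gamma>" by (simp add: sum_divide_distrib)
        also have "\<dots> \<ge> 1" using pathsum[OF P] gpos by simp
        finally show ?thesis .
      qed
    qed
    moreover have "(\<Sum>e\<in>E. z e * x e) < 1"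
    proof -
      have "(\<Sum>e\<in>E. z e * x e) \<le> (\<Sum>e\<in>E. \<beta> e / \<gamma> * x e)"
        using xnn by (intro sum_mono mult_right_mono) (auto simp: z_def)
      also have "\<dots> = (\<Sum>e\<in>E. \<beta> e * x e) / \<gamma>" by (simp add: sum_divide_distrib)
      also have "\<dots> < 1" using bx gpos by simp
      finally show ?thesis .
    qed
    ultimately show False using H by force
  qed
next
  assume "\<exists>g. (\<forall>e\<in>E. (\<Sum>P\<in>{P\<in>Ps. e\<in>path_edges P}. g P) \<le> x e) \<and> (\<Sum>P\<in>Ps. g P) \<ge> 1 \<and> (\<forall>P\<in>Ps. g P \<ge> 0)"
  then obtain g where g1: "\<forall>e\<in>E. (\<Sum>P\<in>{P\<in>Ps. e\<in>path_edges P}. g P) \<le> x e"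
    and g2: "(\<Sum>P\<in>Ps. g P) \<ge> 1" and g3: "\<forall>P\<in>Ps. g P \<ge> 0" by blast
  show "\<forall>z\<in>Zset E Ps. (\<Sum>e\<in>E. z e * x e) \<ge> 1"
  proof
    fix z assume z: "z \<in> Zset E Ps"
    have zn: "\<forall>e\<in>E. 0 \<le> z e" and zP: "\<forall>P\<in>Ps. (\<Sum>e\<in>path_edges P. z e) \<ge> 1"
      using z unfolding Zset_def by auto
    have "1 \<le> (\<Sum>P\<in>Ps. g P)" by (rule g2)
    also have "\<dots> \<le> (\<Sum>P\<in>Ps. g P * (\<Sum>e\<in>path_edges P. z e))"
      using zP g3 by (intro sum_mono) (metis mult.right_neutral mult_left_mono)
    also have "\<dots> = (\<Sum>P\<in>Ps. \<Sum>e\<in>E. if e \<in> path_edges P then g P * z e else 0)"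
    proof (rule sum.cong[OF refl])
      fix P assume P: "P \<in> Ps"
      have "(\<Sum>e\<in>E. if e \<in> path_edges P then g P * z e else 0) = (\<Sum>e\<in>{e\<in>E. e \<in> path_edges P}. g P * z e)"
        using fE by (simp add: sum.inter_filter)
      also have "{e\<in>E. e \<in> path_edges P} = path_edges P" using sub P by auto
      finally show "g P * (\<Sum>e\<in>path_edges P. z e) = (\<Sum>e\<in>E. if e \<in> path_edges P then g P * z e else 0)"
        by (simp add: sum_distrib_left)
    qed
    also have "\<dots> = (\<Sum>e\<in>E. \<Sum>P\<in>Ps. if e \<in> path_edges P then g P * z e else 0)"
      by (rule sum.swap)
    also have "\<dots> = (\<Sum>e\<in>E. z e * (\<Sum>P\<in>{P\<in>Ps. e\<in>path_edges P}. g P))"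
      using fP by (intro sum.cong[OF refl]) (simp add: sum.inter_filter sum_distrib_left, rule sum.cong, auto)
    also have "\<dots> \<le> (\<Sum>e\<in>E. z e * x e)"
      using zn g1 by (intro sum_mono mult_left_mono) auto
    finally show "(\<Sum>e\<in>E. z e * x e) \<ge> 1" .
  qed
qed

theorem theorem5:
  fixes V :: "'a set" and E :: "('a \<times> 'a) set" and w :: "'a \<times> 'a \<Rightarrow> real"
    and k :: real and x :: "'a \<times> 'a \<Rightarrow> real"
  assumes "finite V" and "E \<subseteq> V \<times> V" and "\<forall>e\<in>E. w e > 0"
  shows "LP_spanner_feasible E (stretch_paths E w k) x \<longleftrightarrow>
         (\<exists>f. LP_flow_feasible E (stretch_paths E w k) x f)"
proof -
  have "finite (V \<times> V)" using assms(1) by simp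
  then have fE: "finite E" using assms(2) by (rule finite_subset[rotated])
  have fin: "finite (stretch_paths E w k u v)" if "(u, v) \<in> E" for u v
  proof -
    have "v \<in> V" using that assms(2) by auto
    then show ?thesis by (rule finite_stretch[OF assms(1,2)])
  qed
  have sub: "\<forall>P\<in>stretch_paths E w k u v. path_edges P \<subseteq> E" for u v
  proof
    fix P assume "P \<in> stretch_paths E w k u v"
    then have "is_path E u v P" unfolding stretch_paths_def by simp
    then show "path_edges P \<subseteq> E" by (rule path_edges_sub)
  qed
  define Q where "Q u v g \<longleftrightarrow> (\<forall>e\<in>E. (\<Sum>P\<in>{P\<in>stretch_paths E w k u v. e\<in>path_edges P}. g P) \<le> x e) \<and>
      (\<Sum>P\<in>stretch_paths E w k u v. g P) \<ge> 1 \<and> (\<forall>P\<in>stretch_paths E w k u v. g P \<ge> 0)" for u v g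
  have flowQ: "LP_flow_feasible E (stretch_paths E w k) x f \<longleftrightarrow>
      (\<forall>u v. (u, v) \<in> E \<longrightarrow> Q u v (f (u, v))) \<and> (\<forall>e\<in>E. x e \<ge> 0)" for f
    unfolding LP_flow_feasible_def Q_def by blast
  have spQ: "LP_spanner_feasible E (stretch_paths E w k) x \<longleftrightarrow>
      (\<forall>u v. (u, v) \<in> E \<longrightarrow> (\<forall>z\<in>Zset E (stretch_paths E w k u v). (\<Sum>e\<in>E. z e * x e) \<ge> 1)) \<and> (\<forall>e\<in>E. x e \<ge> 0)"
    unfolding LP_spanner_feasible_def by blast
  have one: "(\<forall>z\<in>Zset E (stretch_paths E w k u v). (\<Sum>e\<in>E. z e * x e) \<ge> 1) \<longleftrightarrow> (\<exists>g. Q u v g)"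
    if "(u, v) \<in> E" "\<forall>e\<in>E. x e \<ge> 0" for u v
    unfolding Q_def by (rule duality_one[OF fE fin[OF that(1)] sub that(2)])
  show ?thesis
  proof
    assume H: "LP_spanner_feasible E (stretch_paths E w k) x"
    then have xnn: "\<forall>e\<in>E. x e \<ge> 0" and H2: "\<And>u v. (u, v) \<in> E \<Longrightarrow> (\<forall>z\<in>Zset E (stretch_paths E w k u v). (\<Sum>e\<in>E. z e * x e) \<ge> 1)"
      using spQ by blast+
    have "\<forall>uv. \<exists>g. uv \<in> E \<longrightarrow> Q (fst uv) (snd uv) g"
    proof
      fix uv :: "'a \<times> 'a"
      show "\<exists>g. uv \<in> E \<longrightarrow> Q (fst uv) (snd uv) g"
      proof (cases "uv \<in> E")
        case True
        then have "(fst uv, snd uv) \<in> E" by simp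
        then have "\<exists>g. Q (fst uv) (snd uv) g" using one[OF _ xnn] H2 by blast
        then show ?thesis by blast
      qed simp
    qed
    then obtain f where f: "\<And>uv. uv \<in> E \<Longrightarrow> Q (fst uv) (snd uv) (f uv)" by (metis choice)
    have "LP_flow_feasible E (stretch_paths E w k) x f"
      unfolding flowQ using f xnn by (metis fst_conv snd_conv)
    then show "\<exists>f. LP_flow_feasible E (stretch_paths E w k) x f" by blast
  next
    assume "\<exists>f. LP_flow_feasible E (stretch_paths E w k) x f"
    then obtain f where f: "LP_flow_feasible E (stretch_paths E w k) x f" by blast
    then have xnn: "\<forall>e\<in>E. x e \<ge> 0" and fQ: "\<And>u v. (u, v) \<in> E \<Longrightarrow> Q u v (f (u, v))"
      using flowQ by blast+
    have "(\<forall>z\<in>Zset E (stretch_paths E w k u v). (\<Sum>e\<in>E. z e * x e) \<ge> 1)" if uv: "(u, v) \<in> E" for u v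
      using one[OF uv xnn] fQ[OF uv] by blast
    then show "LP_spanner_feasible E (stretch_paths E w k) x"
      unfolding spQ using xnn by blast
  qed
qed

end
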